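(* For any time warps $f,g$ and any $p\in\overline{\omega}$: (a) $(f\backslash g)(p)=0$ if $p=0$; $(f\backslash g)(p)=\bigvee\{q\in\overline{\omega}\mid f(q)\le g(p)\}$ if $p\in\omega\setminus\{0\}$; and $(f\backslash g)(p)=\bigvee\{q\in\overline{\omega}\mid \exists m\in\omega\,(f(q)\le g(m))\}$ if $p=\omega$. (b) $(g/f)(p)=\bigwedge\{g(q)\mid q\in\overline{\omega},\ p\le f(q)\}$ (with $\bigwedge\emptyset=\omega$).
   Context: Let $\overline{\omega}=\omega\cup\{\omega\}$ be the natural numbers with a top element $\omega$ adjoined, with its natural total order. A time warp is a monotone map $f\colon\overline{\omega}\to\overline{\omega}$ with $f(0)=0$ and $f(\omega)=\bigvee\{f(n)\mid n\in\omega\}$. The set $W$ of time warps is ordered pointwise; $fg:=f\circ g$. The residuals $\backslash,/$ are the binary operations on $W$ satisfying, for all $f,g,h\in W$: $f\le h/g \iff fg\le h \iff g\le f\backslash h$. *)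

theory Defs
  imports Main "HOL-Library.Extended_Nat"
begin

text \<open>The extended naturals omega-bar are modelled by enat (top element is \<infinity>).\<close>

definition time_warp :: "(enat \<Rightarrow> enat) \<Rightarrow> bool" where
  "time_warp f \<longleftrightarrow> mono f \<and> f 0 = 0 \<and> f \<infinity> = (SUP n::nat. f (enat n))"

definition W :: "(enat \<Rightarrow> enat) set" where
  "W = {f. time_warp f}"

end

theory Submission
  imports Defs
begin

lemma tw_sup:
  assumes "time_warp f"
  shows "f (Sup S) = (SUP q\<in>S. f q)"
proof (cases "S = {}")
  case True
  then show ?thesis using assms by (simp add: time_warp_def bot_enat_def)
next
  case ne: False
  have mono: "mono f" using assms by (simp add: time_warp_def)
  show ?thesis
  proof (cases "finite S")
    case True
    then have "Sup S \<in> S" using ne by (simp add: Sup_enat_def)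
    moreover have "f q \<le> f (Sup S)" if "q \<in> S" for q
      using mono that by (simp add: Sup_upper monoD)
    ultimately show ?thesis by (intro antisym SUP_upper SUP_least) auto
  next
    case False
    then have si: "Sup S = \<infinity>" using ne by (simp add: Sup_enat_def)
    have "f \<infinity> = (SUP n::nat. f (enat n))" using assms by (simp add: time_warp_def)
    also have "\<dots> \<le> (SUP q\<in>S. f q)"
    proof (rule SUP_least)
      fix n :: nat
      obtain q where q: "q \<in> S" "enat n \<le> q"
        using False finite_enat_bounded[of S n] by (meson linear)
      then have "f (enat n) \<le> f q" using mono by (simp add: monoD)
      also have "\<dots> \<le> (SUP q\<in>S. f q)" using q by (intro SUP_upper)
      finally show "f (enat n) \<le> (SUP q\<in>S. f q)" .
    qed
    finally have "f (Sup S) \<le> (SUP q\<in>S. f q)" using si by simp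
    moreover have "(SUP q\<in>S. f q) \<le> f (Sup S)"
      using mono by (intro SUP_least) (simp add: Sup_upper monoD)
    ultimately show ?thesis by (rule antisym)
  qed
qed

lemma Inf_enat_in: "(S::enat set) \<noteq> {} \<Longrightarrow> Inf S \<in> S"
  unfolding Inf_enat_def by (auto intro: LeastI_ex)

lemma all_le_inf: "(\<And>n. enat n \<le> (x::enat)) \<Longrightarrow> x = \<infinity>"
  by (cases x) (auto, metis Suc_n_not_le_n enat_ord_simps(1))

theorem lemma2p1:
  fixes ldiv rdiv :: "(enat \<Rightarrow> enat) \<Rightarrow> (enat \<Rightarrow> enat) \<Rightarrow> (enat \<Rightarrow> enat)"
  assumes ldiv_W: "\<And>f h. f \<in> W \<Longrightarrow> h \<in> W \<Longrightarrow> ldiv f h \<in> W"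
      and rdiv_W: "\<And>h g. h \<in> W \<Longrightarrow> g \<in> W \<Longrightarrow> rdiv h g \<in> W"
      and rres: "\<And>f g h. f \<in> W \<Longrightarrow> g \<in> W \<Longrightarrow> h \<in> W \<Longrightarrow> (f \<le> rdiv h g \<longleftrightarrow> f \<circ> g \<le> h)"
      and lres: "\<And>f g h. f \<in> W \<Longrightarrow> g \<in> W \<Longrightarrow> h \<in> W \<Longrightarrow> (g \<le> ldiv f h \<longleftrightarrow> f \<circ> g \<le> h)"
      and f: "f \<in> W" and g: "g \<in> W"
  shows "(ldiv f g p =
           (if p = 0 then 0
            else if p = \<infinity> then Sup {q. \<exists>m::nat. f q \<le> g (enat m)}
            else Sup {q. f q \<le> g p})) \<and>
         rdiv g f p = Inf {g q | q. p \<le> f q}"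
proof -
  have ftw: "time_warp f" and gtw: "time_warp g" using f g by (auto simp: W_def)
  have fm: "mono f" and f0: "f 0 = 0" and finf: "f \<infinity> = (SUP n::nat. f (enat n))"
    using ftw by (auto simp: time_warp_def)
  have gm: "mono g" and g0: "g 0 = 0" and ginf: "g \<infinity> = (SUP n::nat. g (enat n))"
    using gtw by (auto simp: time_warp_def)
  define T where "T p = {q. \<exists>m::nat. enat m \<le> p \<and> f q \<le> g (enat m)}" for p
  define k where "k p = (if p = 0 then 0 else Sup (T p))" for p
  have kmono: "mono k"
  proof (rule monoI)
    fix x y :: enat assume "x \<le> y"
    then have "T x \<subseteq> T y" unfolding T_def by (auto intro: order_trans)
    then show "k x \<le> k y" using \<open>x \<le> y\<close> unfolding k_def by (auto intro: Sup_subset_mono)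
  qed
  have kinf: "k \<infinity> = (SUP n::nat. k (enat n))"
  proof (rule antisym)
    show "k \<infinity> \<le> (SUP n::nat. k (enat n))"
      unfolding k_def[of \<infinity>]
    proof (simp, rule Sup_least)
      fix q assume "q \<in> T \<infinity>"
      then obtain m where m: "f q \<le> g (enat m)" unfolding T_def by auto
      have "q \<in> T (enat (Suc m))" unfolding T_def using m by (intro CollectI exI[of _ m]) simp
      then have "q \<le> k (enat (Suc m))" unfolding k_def by (simp add: zero_enat_def Sup_upper)
      also have "\<dots> \<le> (SUP n::nat. k (enat n))" by (rule SUP_upper) simp
      finally show "q \<le> (SUP n::nat. k (enat n))" .
    qed
    show "(SUP n::nat. k (enat n)) \<le> k \<infinity>"
      by (rule SUP_least) (simp add: kmono monoD)
  qed
  have kW: "k \<in> W" unfolding W_def time_warp_def using kmono kinf by (simp add: k_def)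
  have fk: "f \<circ> k \<le> g"
  proof (rule le_funI)
    fix p
    show "(f \<circ> k) p \<le> g p"
    proof (cases "p = 0")
      case True then show ?thesis by (simp add: k_def f0 g0)
    next
      case False
      have "f (Sup (T p)) = (SUP q\<in>T p. f q)" by (rule tw_sup[OF ftw])
      also have "\<dots> \<le> g p"
      proof (rule SUP_least)
        fix q assume "q \<in> T p"
        then obtain m where "enat m \<le> p" "f q \<le> g (enat m)" unfolding T_def by auto
        then show "f q \<le> g p" using gm by (meson monoD order_trans)
      qed
      finally show ?thesis using False by (simp add: k_def)
    qed
  qed
  have kmax: "h \<le> k" if hW: "h \<in> W" and hf: "f \<circ> h \<le> g" for h
  proof -
    have htw: "mono h" "h 0 = 0" "h \<infinity> = (SUP n::nat. h (enat n))"
      using hW by (auto simp: W_def time_warp_def)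
    have fin: "h (enat n) \<le> k (enat n)" for n
    proof (cases "n = 0")
      case True then show ?thesis using htw by (simp add: k_def zero_enat_def[symmetric])
    next
      case False
      have "f (h (enat n)) \<le> g (enat n)" using hf by (metis comp_apply le_funD)
      then have "h (enat n) \<in> T (enat n)" unfolding T_def by auto
      then show ?thesis using False by (simp add: k_def zero_enat_def Sup_upper)
    qed
    show ?thesis
    proof (rule le_funI)
      fix p show "h p \<le> k p"
      proof (cases p)
        case (enat n) then show ?thesis using fin by simp
      next
        case infinity
        have "h \<infinity> \<le> k \<infinity>" unfolding htw(3) kinf by (rule SUP_mono) (use fin in auto)
        then show ?thesis using infinity by simp
      qed
    qed
  qed
  have ldk: "ldiv f g = k"
  proof (rule antisym)
    have lW: "ldiv f g \<in> W" using ldiv_W f g .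
    have "f \<circ> ldiv f g \<le> g" using lres[OF f lW g] by simp
    then show "ldiv f g \<le> k" using kmax lW by blast
    show "k \<le> ldiv f g" using lres[OF f kW g] fk by simp
  qed
  have parta: "ldiv f g p =
           (if p = 0 then 0
            else if p = \<infinity> then Sup {q. \<exists>m::nat. f q \<le> g (enat m)}
            else Sup {q. f q \<le> g p})"
  proof (cases "p = 0")
    case True then show ?thesis by (simp add: ldk k_def)
  next
    case False
    show ?thesis
    proof (cases p)
      case infinity then show ?thesis by (simp add: ldk k_def T_def)
    next
      case (enat n)
      have "T p = {q. f q \<le> g p}"
        unfolding T_def using enat gm by (auto, metis enat_ord_simps(1) gm monoD order_trans)
      then show ?thesis using False enat by (simp add: ldk k_def)
    qed
  qed
  define S where "S p = {g q | q. p \<le> f q}" for p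
  define r where "r p = Inf (S p)" for p
  have rmono: "mono r"
  proof (rule monoI)
    fix x y :: enat assume "x \<le> y"
    then have "S y \<subseteq> S x" unfolding S_def by (auto intro: order_trans)
    then show "r x \<le> r y" unfolding r_def by (rule Inf_superset_mono)
  qed
  have r0: "r 0 = 0"
  proof -
    have "g 0 \<in> S 0" unfolding S_def by auto
    then have "r 0 \<le> 0" unfolding r_def using g0 by (metis Inf_lower)
    then show ?thesis by simp
  qed
  have rinf: "r \<infinity> = (SUP n::nat. r (enat n))"
  proof (rule antisym)
    show "(SUP n::nat. r (enat n)) \<le> r \<infinity>"
      by (rule SUP_least) (simp add: rmono monoD)
    define L where "L = (SUP n::nat. r (enat n))"
    show "r \<infinity> \<le> L"
    proof (cases "L = \<infinity>")
      case True then show ?thesis by simp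
    next
      case Lfin: False
      define Q where "Q = {q. g q \<le> L}"
      define q0 where "q0 = Sup Q"
      have gq0: "g q0 \<le> L" unfolding q0_def tw_sup[OF gtw] Q_def by (rule SUP_least) simp
      have "enat n \<le> f q0" for n
      proof -
        have rn: "r (enat n) \<le> L" unfolding L_def by (rule SUP_upper) simp
        then have "S (enat n) \<noteq> {}" using Lfin unfolding r_def by (auto simp: top_enat_def)
        then have "Inf (S (enat n)) \<in> S (enat n)" by (rule Inf_enat_in)
        then obtain q where q: "enat n \<le> f q" "g q = r (enat n)"
          unfolding r_def S_def by auto
        then have "q \<in> Q" unfolding Q_def using rn by simp
        then have "q \<le> q0" unfolding q0_def by (rule Sup_upper)
        then have "f q \<le> f q0" using fm by (simp add: monoD)
        then show ?thesis using q by simp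
      qed
      then have "f q0 = \<infinity>" by (rule all_le_inf)
      then have "g q0 \<in> S \<infinity>" unfolding S_def by auto
      then have "r \<infinity> \<le> g q0" unfolding r_def by (rule Inf_lower)
      then show ?thesis using gq0 by simp
    qed
  qed
  have rW: "r \<in> W" unfolding W_def time_warp_def using rmono r0 rinf by simp
  have rf: "r \<circ> f \<le> g"
  proof (rule le_funI)
    fix p
    have "g p \<in> S (f p)" unfolding S_def by auto
    then show "(r \<circ> f) p \<le> g p" unfolding r_def by (simp add: Inf_lower)
  qed
  have rmax: "h \<le> r" if hW: "h \<in> W" and hf: "h \<circ> f \<le> g" for h
  proof (rule le_funI)
    fix p
    have hm: "mono h" using hW by (simp add: W_def time_warp_def)
    show "h p \<le> r p" unfolding r_def S_def
    proof (rule Inf_greatest, clarify)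
      fix q assume "p \<le> f q"
      then have "h p \<le> h (f q)" using hm by (simp add: monoD)
      also have "\<dots> \<le> g q" using hf by (metis comp_apply le_funD)
      finally show "h p \<le> g q" .
    qed
  qed
  have rdr: "rdiv g f = r"
  proof (rule antisym)
    have dW: "rdiv g f \<in> W" using rdiv_W g f .
    have "rdiv g f \<circ> f \<le> g" using rres[OF dW f g] by simp
    then show "rdiv g f \<le> r" using rmax dW by blast
    show "r \<le> rdiv g f" using rres[OF rW f g] rf by simp
  qed
  show ?thesis using parta rdr by (simp add: r_def S_def)
qed

end
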